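(* Let $G$ be a connected graph with $n(G)\ge 5$ and $\omega(G)=n(G)-2$. Then $$n(G)-4\le \dim_l(G)\le n(G)-3,$$ where $\dim_l(G)=n(G)-3$ if and only if $G$ is $\{\Gamma_1,\Gamma_2\}$-free, and $\dim_l(G)=n(G)-4$ if and only if $G$ contains an induced subgraph isomorphic to $\Gamma_1$ or $\Gamma_2$.
   Context: All graphs are finite and simple. $n(G)$ is the number of vertices and $\omega(G)$ the clique number of $G$. For vertices $x,y$ of a connected graph $G$, $d_G(x,y)$ is the length of a shortest $x,y$-path. A vertex $w$ distinguishes vertices $u,v$ if $d_G(u,w)\neq d_G(v,w)$. A set $W\subseteq V(G)$ is a local resolving set of $G$ if for every pair of adjacent vertices $u,v\in V(G)\setminus W$ some vertex of $W$ distinguishes $u$ and $v$. The local metric dimension $\dim_l(G)$ is the minimum cardinality of a local resolving set of $G$. $\Gamma_1$ is the graph with vertex set $\{v_1,\dots,v_6\}$ and edge set $\{v_iv_j: i\ne j,\ i,j\in\{1,2,3,4\}\}\cup\{v_1v_5,v_1v_6,v_2v_5,v_3v_6\}$; $\Gamma_2$ is obtained from $\Gamma_1$ by adding the edge $v_5v_6$. A graph is $\{\Gamma_1,\Gamma_2\}$-free if it has no induced subgraph isomorphic to $\Gamma_1$ or to $\Gamma_2$. *)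

theory Defs
  imports Main
begin

definition simple_graph :: "'a set \<Rightarrow> ('a \<Rightarrow> 'a \<Rightarrow> bool) \<Rightarrow> bool" where
  "simple_graph V E \<longleftrightarrow> finite V \<and> (\<forall>x y. E x y \<longrightarrow> x \<in> V \<and> y \<in> V)
     \<and> (\<forall>x y. E x y \<longrightarrow> E y x) \<and> (\<forall>x. \<not> E x x)"

inductive walk :: "'a set \<Rightarrow> ('a \<Rightarrow> 'a \<Rightarrow> bool) \<Rightarrow> 'a \<Rightarrow> 'a \<Rightarrow> nat \<Rightarrow> bool"
  for V E where
  walk_nil: "x \<in> V \<Longrightarrow> walk V E x x 0"
| walk_cons: "E x y \<Longrightarrow> walk V E y z k \<Longrightarrow> walk V E x z (Suc k)"

definition connected_graph :: "'a set \<Rightarrow> ('a \<Rightarrow> 'a \<Rightarrow> bool) \<Rightarrow> bool" where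
  "connected_graph V E \<longleftrightarrow> V \<noteq> {} \<and> (\<forall>x\<in>V. \<forall>y\<in>V. \<exists>k. walk V E x y k)"

definition gdist :: "'a set \<Rightarrow> ('a \<Rightarrow> 'a \<Rightarrow> bool) \<Rightarrow> 'a \<Rightarrow> 'a \<Rightarrow> nat" where
  "gdist V E x y = (LEAST k. walk V E x y k)"

definition distinguishes :: "'a set \<Rightarrow> ('a \<Rightarrow> 'a \<Rightarrow> bool) \<Rightarrow> 'a \<Rightarrow> 'a \<Rightarrow> 'a \<Rightarrow> bool" where
  "distinguishes V E w u v \<longleftrightarrow> gdist V E u w \<noteq> gdist V E v w"

definition local_resolving_set :: "'a set \<Rightarrow> ('a \<Rightarrow> 'a \<Rightarrow> bool) \<Rightarrow> 'a set \<Rightarrow> bool" where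
  "local_resolving_set V E W \<longleftrightarrow> W \<subseteq> V \<and>
     (\<forall>u\<in>V - W. \<forall>v\<in>V - W. E u v \<longrightarrow> (\<exists>w\<in>W. distinguishes V E w u v))"

definition local_metric_dim :: "'a set \<Rightarrow> ('a \<Rightarrow> 'a \<Rightarrow> bool) \<Rightarrow> nat" where
  "local_metric_dim V E = Min {card W | W. local_resolving_set V E W}"

definition is_clique :: "'a set \<Rightarrow> ('a \<Rightarrow> 'a \<Rightarrow> bool) \<Rightarrow> 'a set \<Rightarrow> bool" where
  "is_clique V E K \<longleftrightarrow> K \<subseteq> V \<and> (\<forall>x\<in>K. \<forall>y\<in>K. x \<noteq> y \<longrightarrow> E x y)"

definition clique_number :: "'a set \<Rightarrow> ('a \<Rightarrow> 'a \<Rightarrow> bool) \<Rightarrow> nat" where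
  "clique_number V E = Max {card K | K. is_clique V E K}"

definition Gamma1_edge :: "nat \<Rightarrow> nat \<Rightarrow> bool" where
  "Gamma1_edge i j \<longleftrightarrow> i \<noteq> j \<and> ((i \<in> {1..4} \<and> j \<in> {1..4}) \<or>
     {i, j} \<in> {{1,5}, {1,6}, {2,5}, {3,6}})"

definition Gamma2_edge :: "nat \<Rightarrow> nat \<Rightarrow> bool" where
  "Gamma2_edge i j \<longleftrightarrow> Gamma1_edge i j \<or> {i, j} = {5, 6}"

definition has_induced :: "'a set \<Rightarrow> ('a \<Rightarrow> 'a \<Rightarrow> bool) \<Rightarrow> (nat \<Rightarrow> nat \<Rightarrow> bool) \<Rightarrow> bool" where
  "has_induced V E H \<longleftrightarrow> (\<exists>f :: nat \<Rightarrow> 'a. inj_on f {1..6} \<and> f ` {1..6} \<subseteq> V \<and>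
     (\<forall>i\<in>{1..6}. \<forall>j\<in>{1..6}. E (f i) (f j) \<longleftrightarrow> H i j))"

definition Gamma_free :: "'a set \<Rightarrow> ('a \<Rightarrow> 'a \<Rightarrow> bool) \<Rightarrow> bool" where
  "Gamma_free V E \<longleftrightarrow> \<not> has_induced V E Gamma1_edge \<and> \<not> has_induced V E Gamma2_edge"

end

theory Submission
  imports Defs
begin

lemma walk_in_V:
  assumes "simple_graph V E" "walk V E x y k" shows "x \<in> V \<and> y \<in> V"
  using assms(2) by induction (use assms(1) in \<open>auto simp: simple_graph_def\<close>)

lemma walk_0: "walk V E x y 0 \<Longrightarrow> x = y"
  by (erule walk.cases) auto

lemma walk_1: "walk V E x y (Suc 0) \<Longrightarrow> E x y"
  by (erule walk.cases) (auto dest: walk_0)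

lemma walk_2: "walk V E x y (Suc (Suc 0)) \<Longrightarrow> \<exists>z. E x z \<and> E z y"
  by (erule walk.cases) (auto dest: walk_1)

lemma walk_closed:
  assumes "walk V E s t k" "s \<in> S" "\<forall>p q. p \<in> S \<longrightarrow> E p q \<longrightarrow> q \<in> S"
  shows "t \<in> S"
  using assms by induction auto

lemma conn_walk:
  assumes "connected_graph V E" "x \<in> V" "y \<in> V"
  shows "walk V E x y (gdist V E x y)"
proof -
  from assms obtain k where "walk V E x y k" unfolding connected_graph_def by blast
  then show ?thesis unfolding gdist_def by (rule LeastI)
qed

lemma gdist_le: "walk V E x y k \<Longrightarrow> gdist V E x y \<le> k"
  unfolding gdist_def by (rule Least_le)

lemma gdist_self: "x \<in> V \<Longrightarrow> gdist V E x x = 0"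
  using gdist_le[OF walk_nil[of x V E]] by simp

lemma gdist_1_iff:
  assumes "simple_graph V E" "connected_graph V E" "x \<in> V" "y \<in> V"
  shows "gdist V E x y = 1 \<longleftrightarrow> E x y"
proof
  assume "gdist V E x y = 1"
  then show "E x y" using conn_walk[OF assms(2-4)] walk_1 by fastforce
next
  assume e: "E x y"
  have w: "walk V E x y (Suc 0)" using e assms(4) by (auto intro: walk.intros)
  have "x \<noteq> y" using e assms(1) unfolding simple_graph_def by auto
  then have "gdist V E x y \<noteq> 0" using conn_walk[OF assms(2-4)] walk_0 by (metis)
  then show "gdist V E x y = 1" using gdist_le[OF w] by simp
qed

lemma gdist_2:
  assumes "simple_graph V E" "connected_graph V E" "x \<noteq> y" "\<not> E x y" "E x z" "E z y"
  shows "gdist V E x y = 2"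
proof -
  have V: "x \<in> V" "y \<in> V" "z \<in> V" using assms(1,5,6) unfolding simple_graph_def by auto
  have w: "walk V E x y (Suc (Suc 0))" using assms(5,6) V by (auto intro: walk.intros)
  have "gdist V E x y \<noteq> 0" using conn_walk[OF assms(2) V(1,2)] walk_0 assms(3) by metis
  moreover have "gdist V E x y \<noteq> 1" using gdist_1_iff[OF assms(1,2) V(1,2)] assms(4) by simp
  ultimately show ?thesis using gdist_le[OF w] by simp
qed

lemma gdist_2_common:
  assumes "connected_graph V E" "x \<in> V" "y \<in> V" "gdist V E x y = 2"
  shows "\<exists>z. E x z \<and> E z y"
  using conn_walk[OF assms(1-3)] assms(4) walk_2 by (metis numeral_2_eq_2)

lemma twin_walk:
  assumes "walk V E u w k" "w \<noteq> u" "E u v" "\<forall>z. z \<noteq> v \<longrightarrow> E u z \<longrightarrow> E v z"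
  shows "\<exists>k'\<le>k. walk V E v w k'"
  using assms(1)
proof (cases rule: walk.cases)
  case walk_nil then show ?thesis using assms(2) by simp
next
  case (walk_cons z k0)
  show ?thesis
  proof (cases "z = v")
    case True then have "walk V E v w k0" using walk_cons by simp
    then show ?thesis using walk_cons by (intro exI[of _ k0]) auto
  next
    case False
    then have "E v z" using assms(4) walk_cons by auto
    then have "walk V E v w (Suc k0)" using walk_cons by (intro walk.walk_cons)
    then show ?thesis using walk_cons by auto
  qed
qed

lemma twin_gdist:
  assumes sg: "simple_graph V E" and cg: "connected_graph V E"
    and "u \<in> V" "v \<in> V" "w \<in> V" "w \<noteq> u" "w \<noteq> v" "E u v"
    and tw: "\<forall>z. z \<noteq> u \<and> z \<noteq> v \<longrightarrow> (E u z \<longleftrightarrow> E v z)"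
  shows "gdist V E u w = gdist V E v w"
proof -
  have irr: "\<And>a. \<not> E a a" and sym: "\<And>a b. E a b \<Longrightarrow> E b a"
    using sg unfolding simple_graph_def by auto
  have 1: "gdist V E v w \<le> gdist V E u w"
  proof -
    have "\<forall>z. z \<noteq> v \<longrightarrow> E u z \<longrightarrow> E v z" using tw irr by metis
    then obtain k' where "k' \<le> gdist V E u w" "walk V E v w k'"
      using twin_walk[OF conn_walk[OF cg assms(3,5)] assms(6,8)] by blast
    then show ?thesis using gdist_le by (metis le_trans)
  qed
  have 2: "gdist V E u w \<le> gdist V E v w"
  proof -
    have "\<forall>z. z \<noteq> u \<longrightarrow> E v z \<longrightarrow> E u z" using tw irr by metis
    then obtain k' where "k' \<le> gdist V E v w" "walk V E u w k'"
      using twin_walk[OF conn_walk[OF cg assms(4,5)] assms(7) sym[OF assms(8)]] by blast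
    then show ?thesis using gdist_le by (metis le_trans)
  qed
  from 1 2 show ?thesis by simp
qed


locale gsetup =
  fixes V :: "'a set" and E :: "'a \<Rightarrow> 'a \<Rightarrow> bool" and K :: "'a set" and x y :: 'a
  assumes sg: "simple_graph V E" and cg: "connected_graph V E"
    and Kcl: "\<forall>p\<in>K. \<forall>q\<in>K. p \<noteq> q \<longrightarrow> E p q"
    and Vdef: "V = insert x (insert y K)" and xK: "x \<notin> K" and yK: "y \<notin> K" and xy: "x \<noteq> y"
    and n5: "card V \<ge> 5"
    and maxcl: "\<forall>C. is_clique V E C \<longrightarrow> card C \<le> card V - 2"
begin

lemma finV: "finite V" using sg unfolding simple_graph_def by auto
lemma finK: "finite K" using finV Vdef by auto
lemma cardV: "card V = card K + 2" using finK xK yK xy Vdef by auto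
lemma KV: "K \<subseteq> V" using Vdef by auto
lemma xV: "x \<in> V" and yV: "y \<in> V" using Vdef by auto
lemma irr: "\<not> E a a" using sg unfolding simple_graph_def by auto
lemma sym: "E a b \<Longrightarrow> E b a" using sg unfolding simple_graph_def by auto
lemma inV: "E a b \<Longrightarrow> a \<in> V \<and> b \<in> V" using sg unfolding simple_graph_def by auto

lemma swap: "gsetup V E K y x"
  using sg cg Kcl Vdef xK yK xy n5 maxcl unfolding gsetup_def by (auto simp: insert_commute)

lemma d1: "a \<in> V \<Longrightarrow> b \<in> V \<Longrightarrow> gdist V E a b = 1 \<longleftrightarrow> E a b"
  using gdist_1_iff[OF sg cg] by blast

lemma d2: "a \<noteq> b \<Longrightarrow> \<not> E a b \<Longrightarrow> E a z \<Longrightarrow> E z b \<Longrightarrow> gdist V E a b = 2"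
  using gdist_2[OF sg cg] by blast

lemma d2c: "a \<in> V \<Longrightarrow> b \<in> V \<Longrightarrow> gdist V E a b = 2 \<Longrightarrow> \<exists>z. E a z \<and> E z b"
  using gdist_2_common[OF cg] by blast

lemma not_all_x: "\<exists>k\<in>K. \<not> E k x"
proof (rule ccontr)
  assume "\<not> ?thesis"
  then have "is_clique V E (insert x K)" using Kcl KV xV sym unfolding is_clique_def by auto
  then have "card (insert x K) \<le> card V - 2" using maxcl by auto
  then show False using cardV finK xK by simp
qed

lemma some_nb: "\<exists>k\<in>K. E k x \<or> E k y"
proof (rule ccontr)
  assume h: "\<not> ?thesis"
  have "card K \<ge> 3" using cardV n5 by simp
  then obtain k where k: "k \<in> K" by fastforce
  have "walk V E x k (gdist V E x k)" using conn_walk[OF cg xV] k KV by auto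
  moreover have "\<forall>p q. p \<in> {x,y} \<longrightarrow> E p q \<longrightarrow> q \<in> {x,y}"
    using h inV Vdef sym irr by blast
  ultimately have "k \<in> {x,y}" using walk_closed by (metis insertI1)
  then show False using k xK yK by auto
qed

lemma x_nb: "\<not> (\<exists>k\<in>K. E k x) \<Longrightarrow> E x y"
proof -
  assume h: "\<not> (\<exists>k\<in>K. E k x)"
  have "card K \<ge> 3" using cardV n5 by simp
  then obtain k where k: "k \<in> K" by fastforce
  have "walk V E x k (gdist V E x k)" using conn_walk[OF cg xV] k KV by auto
  moreover have "\<forall>p q. p \<in> {x} \<longrightarrow> E p q \<longrightarrow> q \<in> {x}" if "\<not> E x y"
    using h that inV Vdef sym irr by blast
  ultimately show "E x y" using walk_closed k xK by (metis insertI1 singletonD)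
qed

definition fx :: "'a \<Rightarrow> bool" where
  "fx u = (if (\<exists>k\<in>K. E k x) then E u x else E u y)"

lemma Dx:
  assumes u: "u \<in> K" and v: "v \<in> K" and eq: "fx u = fx v"
  shows "gdist V E u x = gdist V E v x"
proof (cases "u = v")
  case True then show ?thesis by simp
next
  case uv: False
  have uV: "u \<in> V" and vV: "v \<in> V" using u v KV by auto
  show ?thesis
  proof (cases "\<exists>k\<in>K. E k x")
    case True
    then obtain k where k: "k \<in> K" "E k x" by blast
    have eq': "E u x = E v x" using eq True unfolding fx_def by simp
    show ?thesis
    proof (cases "E u x")
      case True
      then show ?thesis using eq' d1[OF uV xV] d1[OF vV xV] by simp
    next
      case False
      have "k \<noteq> u" "k \<noteq> v" using k False eq' by auto
      then have "E u k" "E v k" using Kcl k u v by auto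
      then have "gdist V E u x = 2" "gdist V E v x = 2"
        using d2[of u x k] d2[of v x k] False eq' k u v xK by auto
      then show ?thesis by simp
    qed
  next
    case False
    have eq': "E u y = E v y" using eq False unfolding fx_def by simp
    have nx: "\<not> E u x" "\<not> E v x" using False u v sym by auto
    show ?thesis
    proof (rule twin_gdist[OF sg cg uV vV xV])
      show "x \<noteq> u" "x \<noteq> v" using u v xK by auto
      show "E u v" using Kcl u v uv by auto
      show "\<forall>z. z \<noteq> u \<and> z \<noteq> v \<longrightarrow> E u z = E v z"
      proof (intro allI impI)
        fix z assume z: "z \<noteq> u \<and> z \<noteq> v"
        show "E u z = E v z"
        proof (cases "z \<in> V")
          case True
          then show ?thesis using z Kcl u v eq' nx Vdef by auto
        next
          case False
          then show ?thesis using inV by blast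
        qed
      qed
    qed
  qed
qed

end


context gsetup
begin

lemma mk_induced:
  assumes u: "u1 \<in> K" "u2 \<in> K" "u3 \<in> K" "u4 \<in> K"
    and p: "E u1 x" "E u2 x" "\<not> E u3 x" "\<not> E u4 x" "E u1 y" "\<not> E u2 y" "E u3 y" "\<not> E u4 y"
  shows "has_induced V E Gamma1_edge \<or> has_induced V E Gamma2_edge"
proof -
  define f :: "nat \<Rightarrow> 'a" where "f i = (if i = 1 then u1 else if i = 2 then u2 else if i = 3 then u3
     else if i = 4 then u4 else if i = 5 then x else y)" for i
  have s6: "{1..6::nat} = {1,2,3,4,5,6}" by auto
  have d: "u1 \<noteq> u2" "u1 \<noteq> u3" "u1 \<noteq> u4" "u2 \<noteq> u3" "u2 \<noteq> u4" "u3 \<noteq> u4"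
    using p by auto
  have dx: "u1 \<noteq> x" "u2 \<noteq> x" "u3 \<noteq> x" "u4 \<noteq> x" "u1 \<noteq> y" "u2 \<noteq> y" "u3 \<noteq> y" "u4 \<noteq> y"
    using u xK yK by auto
  have e: "E u1 u2" "E u1 u3" "E u1 u4" "E u2 u3" "E u2 u4" "E u3 u4"
    using Kcl u d by auto
  have inj: "inj_on f {1..6}" unfolding s6 inj_on_def f_def using d dx xy by auto
  have img: "f ` {1..6} \<subseteq> V" unfolding s6 f_def using u KV xV yV by auto
  have ee: "E u2 u1" "E u3 u1" "E u4 u1" "E u3 u2" "E u4 u2" "E u4 u3"
    "E x u1" "E x u2" "\<not> E x u3" "\<not> E x u4" "E y u1" "\<not> E y u2" "E y u3" "\<not> E y u4"
    using e p sym by blast+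
  have irr': "\<not> E u1 u1" "\<not> E u2 u2" "\<not> E u3 u3" "\<not> E u4 u4" "\<not> E x x" "\<not> E y y"
    using irr by auto
  show ?thesis
  proof (cases "E x y")
    case True
    then have "E y x" using sym by auto
    then have "\<forall>i\<in>{1..6}. \<forall>j\<in>{1..6}. E (f i) (f j) \<longleftrightarrow> Gamma2_edge i j"
      unfolding s6 f_def Gamma2_edge_def Gamma1_edge_def
      using True e ee p irr' by (simp add: doubleton_eq_iff)
    then show ?thesis unfolding has_induced_def using inj img by blast
  next
    case False
    then have "\<not> E y x" using sym by auto
    then have "\<forall>i\<in>{1..6}. \<forall>j\<in>{1..6}. E (f i) (f j) \<longleftrightarrow> Gamma1_edge i j"
      unfolding s6 f_def Gamma1_edge_def
      using False e ee p irr' by (simp add: doubleton_eq_iff)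
    then show ?thesis unfolding has_induced_def using inj img by blast
  qed
qed

end


context gsetup
begin

lemma lower:
  assumes W: "local_resolving_set V E W"
  shows "card V - 4 \<le> card W \<and>
    (card W \<le> card V - 4 \<longrightarrow> has_induced V E Gamma1_edge \<or> has_induced V E Gamma2_edge)"
proof -
  interpret sw: gsetup V E K y x by (rule swap)
  define U where "U = K - W"
  define g where "g u = (x \<in> W \<and> fx u, y \<in> W \<and> sw.fx u)" for u
  have WV: "W \<subseteq> V" using W unfolding local_resolving_set_def by auto
  have inj: "inj_on g U"
  proof (rule inj_onI)
    fix u v assume u: "u \<in> U" and v: "v \<in> U" and guv: "g u = g v"
    show "u = v"
    proof (rule ccontr)
      assume uv: "u \<noteq> v"
      have uK: "u \<in> K" "u \<notin> W" "v \<in> K" "v \<notin> W" using u v U_def by auto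
      then have "E u v" using Kcl uv by auto
      moreover have "u \<in> V - W" "v \<in> V - W" using uK KV by auto
      ultimately obtain w where w: "w \<in> W" "gdist V E u w \<noteq> gdist V E v w"
        using W unfolding local_resolving_set_def distinguishes_def by blast
      have wV: "w \<in> V" using w WV by auto
      have uV: "u \<in> V" "v \<in> V" using uK KV by auto
      consider "w \<in> K" | "w = x" | "w = y" using wV Vdef by auto
      then show False
      proof cases
        case 1
        have "w \<noteq> u" "w \<noteq> v" using w uK by auto
        then have "E u w" "E v w" using Kcl 1 uK by auto
        then show False using w d1[OF uV(1) wV] d1[OF uV(2) wV] by simp
      next
        case 2
        then have "fx u = fx v" using guv w unfolding g_def by simp
        then have "gdist V E u x = gdist V E v x" using Dx uK by blast
        then show False using w 2 by simp
      next
        case 3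
        then have "sw.fx u = sw.fx v" using guv w unfolding g_def by simp
        then have "gdist V E u y = gdist V E v y" using sw.Dx uK by blast
        then show False using w 3 by simp
      qed
    qed
  qed
  have finW: "finite W" using WV finV finite_subset by auto
  have c1: "card W = card (W \<inter> K) + card (W \<inter> {x,y})"
  proof -
    have "W = (W \<inter> K) \<union> (W \<inter> {x,y})" using WV Vdef by auto
    moreover have "(W \<inter> K) \<inter> (W \<inter> {x,y}) = {}" using xK yK by auto
    ultimately show ?thesis using finW card_Un_disjoint
      by (metis finite_Int)
  qed
  have c2: "card K = card U + card (W \<inter> K)"
  proof -
    have "K = U \<union> (W \<inter> K)" "U \<inter> (W \<inter> K) = {}" using U_def by auto
    then show ?thesis using finK card_Un_disjoint by (metis finite_Un)
  qed
  have cU: "card U = card (g ` U)" using inj by (simp add: card_image)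
  have finU: "finite U" using finK U_def by auto
  have cV: "card V = card K + 2" by (rule cardV)
  show ?thesis
  proof (cases "x \<in> W \<and> y \<in> W")
    case True
    define T where "T = {(True,True),(True,False),(False,True),(False,False)}"
    have cT: "card T = 4" unfolding T_def by simp
    have gT: "g ` U \<subseteq> T" unfolding T_def by auto
    have cU4: "card U \<le> 4" using cU card_mono[OF _ gT] cT unfolding T_def by simp
    have cxy: "card (W \<inter> {x,y}) = 2" using True xy by (simp add: Int_absorb1)
    have low: "card V - 4 \<le> card W" using c1 c2 cxy cU4 cV by simp
    moreover have "has_induced V E Gamma1_edge \<or> has_induced V E Gamma2_edge"
      if le: "card W \<le> card V - 4"
    proof -
      have "card U = 4" using le c1 c2 cxy cU4 cV by simp
      then have "card (g ` U) = card T" using cU cT by simp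
      then have gU: "g ` U = T" using card_subset_eq[OF _ gT] unfolding T_def by simp
      have gg: "g u = (fx u, sw.fx u)" for u using True unfolding g_def by simp
      have ex: "\<And>p q. \<exists>u\<in>K. fx u = p \<and> sw.fx u = q"
      proof -
        fix p q
        have "(p,q) \<in> T" unfolding T_def by (cases p; cases q; simp)
        then obtain u where "u \<in> U" "g u = (p,q)" using gU by (metis (no_types, lifting) imageE)
        then show "\<exists>u\<in>K. fx u = p \<and> sw.fx u = q" using gg U_def by auto
      qed
      have nx: "\<exists>k\<in>K. E k x"
      proof (rule ccontr)
        assume h: "\<not> (\<exists>k\<in>K. E k x)"
        obtain u where u: "u \<in> K" "fx u" "\<not> sw.fx u" using ex[of True False] by blast
        obtain v where v: "v \<in> K" "\<not> fx v" "sw.fx v" using ex[of False True] by blast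
        show False
        proof (cases "\<exists>k\<in>K. E k y")
          case True
          then show False using u h unfolding fx_def sw.fx_def by auto
        next
          case False
          then show False using v h unfolding fx_def sw.fx_def by auto
        qed
      qed
      have ny: "\<exists>k\<in>K. E k y"
      proof (rule ccontr)
        assume h: "\<not> (\<exists>k\<in>K. E k y)"
        obtain u where u: "u \<in> K" "fx u" "\<not> sw.fx u" using ex[of True False] by blast
        show False using u h nx unfolding fx_def sw.fx_def by auto
      qed
      have fxe: "fx u = E u x" "sw.fx u = E u y" for u using nx ny unfolding fx_def sw.fx_def by auto
      obtain u1 where "u1 \<in> K" "E u1 x" "E u1 y" using ex[of True True] fxe by blast
      moreover obtain u2 where "u2 \<in> K" "E u2 x" "\<not> E u2 y" using ex[of True False] fxe by blast
      moreover obtain u3 where "u3 \<in> K" "\<not> E u3 x" "E u3 y" using ex[of False True] fxe by blast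
      moreover obtain u4 where "u4 \<in> K" "\<not> E u4 x" "\<not> E u4 y" using ex[of False False] fxe by blast
      ultimately show ?thesis using mk_induced by blast
    qed
    ultimately show ?thesis by blast
  next
    case False
    have gT: "g ` U \<subseteq> {(x \<in> W, y \<in> W),(False,False)}" using False unfolding g_def by auto
    have "card {(x \<in> W, y \<in> W),(False,False)} \<le> 2" by (simp add: card_insert_le_m1)
    then have cU2: "card U \<le> 2" using cU card_mono[OF _ gT] by simp
    have cxy: "x \<notin> W \<and> y \<notin> W \<Longrightarrow> card U \<le> 1"
    proof -
      assume "x \<notin> W \<and> y \<notin> W"
      then have "g ` U \<subseteq> {(False,False)}" unfolding g_def by auto
      then show "card U \<le> 1" using cU card_mono[of "{(False,False)}" "g ` U"] by simp
    qed
    have "card V - 3 \<le> card W"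
    proof (cases "x \<in> W \<or> y \<in> W")
      case True
      then have "card (W \<inter> {x,y}) = 1" using False xy
        by (cases "x \<in> W") (auto simp: Int_insert_right)
      then show ?thesis using c1 c2 cU2 cV by simp
    next
      case F2: False
      then have "card (W \<inter> {x,y}) = 0" by auto
      then show ?thesis using c1 c2 cxy F2 cV by simp
    qed
    then show ?thesis using n5 by auto
  qed
qed

end


context gsetup
begin

lemma lrs3:
  assumes V: "p \<in> V" "q \<in> V" "r \<in> V" and d: "p \<noteq> q" "p \<noteq> r" "q \<noteq> r"
    and c1: "E p q \<Longrightarrow> \<exists>w\<in>V-{p,q,r}. gdist V E p w \<noteq> gdist V E q w"
    and c2: "E p r \<Longrightarrow> \<exists>w\<in>V-{p,q,r}. gdist V E p w \<noteq> gdist V E r w"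
    and c3: "E q r \<Longrightarrow> \<exists>w\<in>V-{p,q,r}. gdist V E q w \<noteq> gdist V E r w"
  shows "\<exists>W. local_resolving_set V E W \<and> card W = card V - 3"
proof (intro exI conjI)
  show "card (V - {p,q,r}) = card V - 3"
    using V d finV by (simp add: card_Diff_subset)
  have VW: "V - (V - {p,q,r}) = {p,q,r}" using V by auto
  show "local_resolving_set V E (V - {p,q,r})"
    unfolding local_resolving_set_def distinguishes_def VW
  proof (intro conjI ballI impI)
    show "V - {p, q, r} \<subseteq> V" by auto
    fix u v assume u: "u \<in> {p,q,r}" and v: "v \<in> {p,q,r}" and e: "E u v"
    have uv: "u \<noteq> v" using e irr by auto
    have A: "(u=p \<and> v=q) \<or> (u=q \<and> v=p) \<or> (u=p \<and> v=r) \<or> (u=r \<and> v=p) \<or> (u=q \<and> v=r) \<or> (u=r \<and> v=q)"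
      using u v uv by auto
    then show "\<exists>w\<in>V - {p, q, r}. gdist V E u w \<noteq> gdist V E v w"
      by (elim disjE conjE; metis c1 c2 c3 e sym)
  qed
qed

lemma caseA:
  assumes nx: "\<not> (\<exists>k\<in>K. E k x)"
  shows "\<exists>W. local_resolving_set V E W \<and> card W = card V - 3"
proof -
  interpret sw: gsetup V E K y x by (rule swap)
  have Exy: "E x y" using x_nb nx by blast
  obtain a0 where a0: "a0 \<in> K" "E a0 y" using some_nb nx by blast
  obtain b0 where b0: "b0 \<in> K" "\<not> E b0 y" using sw.not_all_x by blast
  have nxa: "\<not> E a0 x" "\<not> E b0 x" using nx a0 b0 by auto
  have da: "gdist V E a0 x = 2" using d2[of a0 x y] a0 nxa xK Exy sym by blast
  have db: "gdist V E b0 x \<noteq> 2"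
  proof
    assume "gdist V E b0 x = 2"
    then obtain z where z: "E b0 z" "E z x" using d2c b0 KV xV by blast
    then have "z \<in> V" using inV by blast
    then show False using z Vdef irr b0 nx by auto
  qed
  have dy: "gdist V E y x = 1" using d1 xV yV Exy sym by blast
  have xW: "x \<in> V - {a0, b0, y}" using xV a0 b0 xK xy by auto
  show ?thesis
  proof (rule lrs3[of a0 b0 y])
    show "a0 \<in> V" "b0 \<in> V" "y \<in> V" using a0 b0 KV yV by auto
    show "a0 \<noteq> b0" "a0 \<noteq> y" "b0 \<noteq> y" using a0 b0 yK by auto
    show "\<exists>w\<in>V - {a0, b0, y}. gdist V E a0 w \<noteq> gdist V E b0 w" using xW da db by metis
    show "\<exists>w\<in>V - {a0, b0, y}. gdist V E a0 w \<noteq> gdist V E y w" using xW da dy by (metis numeral_One numeral_eq_iff semiring_norm(85))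
    show "E b0 y \<Longrightarrow> \<exists>w\<in>V - {a0, b0, y}. gdist V E b0 w \<noteq> gdist V E y w" using b0 by simp
  qed
qed

lemma caseS1:
  assumes p: "p \<in> K" "E p x" "\<not> E p y" and q: "q \<in> K" "\<not> E q x" "\<not> E q y"
  shows "\<exists>W. local_resolving_set V E W \<and> card W = card V - 3"
proof -
  have xW: "x \<in> V - {p, q, y}" using xV p q xK xy by auto
  have "gdist V E p x = 1" "gdist V E q x \<noteq> 1" using d1 p q KV xV by auto
  then show ?thesis
    using lrs3[of p q y] p q KV yV yK xW by (metis insert_subset mk_disjoint_insert)
qed

lemma caseS2:
  assumes u: "u \<in> K" "v \<in> K" "w \<in> K"
    and uv: "E u x \<noteq> E v x \<or> E u y \<noteq> E v y"
    and uw: "E u x \<noteq> E w x \<or> E u y \<noteq> E w y"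
    and vw: "E v x \<noteq> E w x \<or> E v y \<noteq> E w y"
  shows "\<exists>W. local_resolving_set V E W \<and> card W = card V - 3"
proof -
  have xW: "x \<in> V - {u, v, w}" and yW: "y \<in> V - {u,v,w}" using xV yV u xK yK by auto
  have dd: "a \<in> K \<Longrightarrow> gdist V E a x = 1 \<longleftrightarrow> E a x" "a \<in> K \<Longrightarrow> gdist V E a y = 1 \<longleftrightarrow> E a y" for a
    using d1 KV xV yV by auto
  have g: "a \<in> K \<Longrightarrow> b \<in> K \<Longrightarrow> E a x \<noteq> E b x \<or> E a y \<noteq> E b y \<Longrightarrow>
     \<exists>z\<in>V-{u,v,w}. gdist V E a z \<noteq> gdist V E b z" for a b
    using xW yW dd by metis
  show ?thesis
  proof (rule lrs3[of u v w])
    show "u \<in> V" "v \<in> V" "w \<in> V" using u KV by auto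
    show "u \<noteq> v" "u \<noteq> w" "v \<noteq> w" using uv uw vw by auto
  qed (use g u uv uw vw in auto)
qed

lemma case1b:
  assumes all: "\<forall>u\<in>K. E u x \<longleftrightarrow> E u y" and p: "p \<in> K" "E p x" and q: "q \<in> K" "\<not> E q x"
  shows "\<exists>W. local_resolving_set V E W \<and> card W = card V - 3"
proof -
  have py: "E p y" "\<not> E q y" using all p q by auto
  have xW: "x \<in> V - {p, q, y}" using xV p q xK xy by auto
  have pq: "gdist V E p x = 1" "gdist V E q x \<noteq> 1" using d1 p q KV xV by auto
  have pyw: "\<exists>w\<in>V - {p, q, y}. gdist V E p w \<noteq> gdist V E y w"
  proof (cases "E x y")
    case False
    then have "gdist V E y x \<noteq> 1" using d1 xV yV sym by blast
    then show ?thesis using pq xW by metis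
  next
    case True
    obtain c where c: "c \<in> K" "c \<noteq> q" "\<not> E c y"
    proof (rule ccontr)
      assume "\<not> thesis"
      then have h: "\<forall>c\<in>K - {q}. E c y" using that by blast
      then have h2: "\<forall>c\<in>K - {q}. E c x" using all by auto
      have "is_clique V E (insert x (insert y (K - {q})))"
        unfolding is_clique_def using Kcl KV xV yV h h2 True sym by auto
      then have "card (insert x (insert y (K - {q}))) \<le> card V - 2" using maxcl by blast
      moreover have "card (insert x (insert y (K - {q}))) = card K + 1"
        using finK xK yK xy q card_Diff1_le[of K q] n5 cardV by (simp add: card_Diff_singleton)
      ultimately show False using cardV n5 by simp
    qed
    have "c \<noteq> p" using c py by auto
    then have "E p c" using c p Kcl by auto
    then have "gdist V E p c = 1" using d1 c p KV by auto
    moreover have "gdist V E y c \<noteq> 1" using d1 c yV KV sym by auto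
    moreover have "c \<in> V - {p,q,y}" using c KV yK `c \<noteq> p` by auto
    ultimately show ?thesis by metis
  qed
  show ?thesis
  proof (rule lrs3[of p q y])
    show "p \<in> V" "q \<in> V" "y \<in> V" using p q KV yV by auto
    show "p \<noteq> q" "p \<noteq> y" "q \<noteq> y" using p q yK by auto
  qed (use pq xW pyw py in metis)+
qed

end


context gsetup
begin

lemma case1c:
  assumes p: "p \<in> K" "E p x" "\<not> E p y" and q: "q \<in> K" "\<not> E q x" "E q y"
    and no11: "\<not> (\<exists>r\<in>K. E r x \<and> E r y)"
  shows "\<exists>W. local_resolving_set V E W \<and> card W = card V - 3"
proof -
  have xW: "x \<in> V - {p, q, y}" using xV p q xK xy by auto
  have pq: "gdist V E p x = 1" "gdist V E q x \<noteq> 1" using d1 p q KV xV by auto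
  have pqn: "p \<noteq> q" using p q by auto
  then have "E q p" using Kcl p q by auto
  then have q2: "gdist V E q x = 2" using d2[of q x p] q p xK by auto
  have y2: "gdist V E y x \<noteq> 2"
  proof (cases "E y x")
    case True then show ?thesis using d1[OF yV xV] by simp
  next
    case False
    show ?thesis
    proof
      assume "gdist V E y x = 2"
      then obtain z where z: "E y z" "E z x" using d2c xV yV by blast
      then have "z \<in> V" "z \<noteq> x" "z \<noteq> y" using inV irr by auto
      then have "z \<in> K" using Vdef by auto
      then show False using no11 z sym by blast
    qed
  qed
  show ?thesis
  proof (rule lrs3[of p q y])
    show "p \<in> V" "q \<in> V" "y \<in> V" using p q KV yV by auto
    show "p \<noteq> q" "p \<noteq> y" "q \<noteq> y" using p q yK by auto
    show "\<exists>w\<in>V - {p, q, y}. gdist V E p w \<noteq> gdist V E q w" using pq xW by metis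
    show "E p y \<Longrightarrow> \<exists>w\<in>V - {p, q, y}. gdist V E p w \<noteq> gdist V E y w" using p by simp
    show "\<exists>w\<in>V - {p, q, y}. gdist V E q w \<noteq> gdist V E y w" using q2 y2 xW by metis
  qed
qed

lemma upper: "\<exists>W. local_resolving_set V E W \<and> card W = card V - 3"
proof -
  interpret sw: gsetup V E K y x by (rule swap)
  show ?thesis
  proof (cases "\<exists>k\<in>K. E k x")
    case False then show ?thesis using caseA by blast
  next
    case nx: True
    show ?thesis
    proof (cases "\<exists>k\<in>K. E k y")
      case False then show ?thesis using sw.caseA by blast
    next
      case ny: True
      show ?thesis
      proof (cases "\<exists>q\<in>K. \<not> E q x \<and> \<not> E q y")
        case True
        then obtain q where q: "q \<in> K" "\<not> E q x" "\<not> E q y" by blast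
        show ?thesis
        proof (cases "\<exists>p\<in>K. E p x \<and> \<not> E p y")
          case True then show ?thesis using caseS1 q by blast
        next
          case F1: False
          show ?thesis
          proof (cases "\<exists>p\<in>K. \<not> E p x \<and> E p y")
            case True then show ?thesis using sw.caseS1 q by blast
          next
            case False
            then have "\<forall>u\<in>K. E u x \<longleftrightarrow> E u y" using F1 by blast
            then show ?thesis using case1b nx q by blast
          qed
        qed
      next
        case F0: False
        obtain p where p: "p \<in> K" "\<not> E p y" using sw.not_all_x by blast
        obtain q where q: "q \<in> K" "\<not> E q x" using not_all_x by blast
        have pq: "E p x" "E q y" using F0 p q by auto
        show ?thesis
        proof (cases "\<exists>r\<in>K. E r x \<and> E r y")
          case True
          then obtain r where "r \<in> K" "E r x" "E r y" by blast
          then show ?thesis using caseS2[of r p q] p q pq by auto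
        next
          case False
          then show ?thesis using case1c p q pq by blast
        qed
      qed
    qed
  qed
qed

end

lemma induced_lrs:
  assumes sg: "simple_graph V E" and cg: "connected_graph V E"
    and hi: "has_induced V E H" and H: "H = Gamma1_edge \<or> H = Gamma2_edge"
  shows "\<exists>W. local_resolving_set V E W \<and> card W = card V - 4"
proof -
  obtain f where inj: "inj_on f {1..6}" and img: "f ` {1..6} \<subseteq> V"
    and ed: "\<forall>i\<in>{1..6}. \<forall>j\<in>{1..6}. E (f i) (f j) \<longleftrightarrow> H i j"
    using hi unfolding has_induced_def by blast
  have pat: "H 1 5" "H 2 5" "\<not> H 3 5" "\<not> H 4 5" "H 1 6" "\<not> H 2 6" "H 3 6" "\<not> H 4 6"
    using H by (auto simp: Gamma1_edge_def Gamma2_edge_def doubleton_eq_iff)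
  have finV: "finite V" using sg unfolding simple_graph_def by auto
  have irr: "\<And>a. \<not> E a a" using sg unfolding simple_graph_def by auto
  define F where "F = f ` {1..4}"
  have FV: "F \<subseteq> V" using img unfolding F_def by auto
  have inj4: "inj_on f {1..4}" using inj by (rule inj_on_subset) auto
  have cF: "card F = 4" unfolding F_def using card_image[OF inj4] by simp
  have nF: "f k \<notin> F" if k: "k \<in> {5,6}" for k
  proof
    assume "f k \<in> F"
    then obtain i where i: "i \<in> {1..4}" "f k = f i" unfolding F_def by auto
    then have "k = i" using inj_onD[OF inj i(2)] k by auto
    then show False using i k by auto
  qed
  have f56: "f 5 \<in> V - F" "f 6 \<in> V - F"
    using img nF by auto
  have dd: "gdist V E (f i) (f k) = 1 \<longleftrightarrow> H i k" if ik: "i \<in> {1..4}" "k \<in> {5,6}" for i k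
  proof -
    have i6: "i \<in> {1..6}" "k \<in> {1..6}" using ik by auto
    then have "f i \<in> V" "f k \<in> V" using img by auto
    moreover have "E (f i) (f k) \<longleftrightarrow> H i k" using ed i6 by blast
    ultimately show ?thesis using gdist_1_iff[OF sg cg] by blast
  qed
  show ?thesis
  proof (intro exI conjI)
    show "card (V - F) = card V - 4" using cF FV finV by (simp add: card_Diff_subset finite_subset)
    have VF: "V - (V - F) = F" using FV by auto
    show "local_resolving_set V E (V - F)"
      unfolding local_resolving_set_def distinguishes_def VF
    proof (intro conjI ballI impI)
      show "V - F \<subseteq> V" by auto
      fix u v assume u: "u \<in> F" and v: "v \<in> F" and e: "E u v"
      obtain i j where ij: "i \<in> {1..4}" "j \<in> {1..4}" "u = f i" "v = f j" using u v F_def by auto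
      have "i \<noteq> j" using e ij irr by auto
      moreover have "i \<in> {1,2,3,4}" "j \<in> {1,2,3,4}" using ij(1,2) by auto
      ultimately have "(H i 5 \<noteq> H j 5) \<or> (H i 6 \<noteq> H j 6)"
        using pat by auto
      then have "gdist V E (f i) (f 5) \<noteq> gdist V E (f j) (f 5) \<or> gdist V E (f i) (f 6) \<noteq> gdist V E (f j) (f 6)"
        using dd[of i 5] dd[of j 5] dd[of i 6] dd[of j 6] ij(1,2) by auto
      then show "\<exists>w\<in>V - F. gdist V E u w \<noteq> gdist V E v w"
        using f56 ij(3,4) by blast
    qed
  qed
qed


theorem corollary2p5:
  fixes V :: "'a set" and E :: "'a \<Rightarrow> 'a \<Rightarrow> bool"
  assumes "simple_graph V E" and "connected_graph V E"
    and "card V \<ge> 5" and "clique_number V E = card V - 2"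
  shows "card V - 4 \<le> local_metric_dim V E \<and> local_metric_dim V E \<le> card V - 3
    \<and> (local_metric_dim V E = card V - 3 \<longleftrightarrow> Gamma_free V E)
    \<and> (local_metric_dim V E = card V - 4 \<longleftrightarrow>
         (has_induced V E Gamma1_edge \<or> has_induced V E Gamma2_edge))"
proof -
  note sg = assms(1) and cg = assms(2) and n5 = assms(3)
  have finV: "finite V" using sg unfolding simple_graph_def by auto
  define S where "S = {card K | K. is_clique V E K}"
  have finS: "finite S"
  proof (rule finite_subset[of _ "{0..card V}"])
    show "S \<subseteq> {0..card V}" unfolding S_def is_clique_def
      using card_mono[OF finV] by auto
  qed simp
  have neS: "S \<noteq> {}" unfolding S_def is_clique_def by auto
  obtain K where Kc: "is_clique V E K" and cK: "card K = card V - 2"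
    using Max_in[OF finS neS] assms(4) unfolding clique_number_def S_def by auto
  have maxcl: "\<forall>C. is_clique V E C \<longrightarrow> card C \<le> card V - 2"
    using Max_ge[OF finS] assms(4) unfolding clique_number_def S_def by auto
  have KV: "K \<subseteq> V" using Kc unfolding is_clique_def by auto
  have "card (V - K) = 2" using cK KV finV n5 by (simp add: card_Diff_subset finite_subset)
  then obtain x y where xy: "V - K = {x,y}" "x \<noteq> y" by (meson card_2_iff)
  interpret gsetup V E K x y
  proof
    show "simple_graph V E" "connected_graph V E" "x \<noteq> y" "5 \<le> card V" by fact+
    show "\<forall>p\<in>K. \<forall>q\<in>K. p \<noteq> q \<longrightarrow> E p q" using Kc unfolding is_clique_def by auto
    show "V = insert x (insert y K)" using xy KV by auto
    show "x \<notin> K" "y \<notin> K" using xy by auto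
    show "\<forall>C. is_clique V E C \<longrightarrow> card C \<le> card V - 2" by fact
  qed
  define D where "D = {card W | W. local_resolving_set V E W}"
  have finD: "finite D"
  proof (rule finite_subset[of _ "{0..card V}"])
    show "D \<subseteq> {0..card V}" unfolding D_def local_resolving_set_def
      using card_mono[OF finV] by auto
  qed simp
  have n3: "card V - 3 \<in> D" using upper unfolding D_def by (metis (mono_tags, lifting) mem_Collect_eq)
  have neD: "D \<noteq> {}" using n3 by auto
  have dim: "local_metric_dim V E = Min D" unfolding local_metric_dim_def D_def by simp
  have lowD: "\<forall>d\<in>D. card V - 4 \<le> d" using lower unfolding D_def by auto
  have ge: "card V - 4 \<le> Min D" using lowD Min_in[OF finD neD] by auto
  have le: "Min D \<le> card V - 3" using Min_le[OF finD n3] .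
  have iff4: "Min D = card V - 4 \<longleftrightarrow> (has_induced V E Gamma1_edge \<or> has_induced V E Gamma2_edge)"
  proof
    assume "Min D = card V - 4"
    then obtain W where "local_resolving_set V E W" "card W = card V - 4"
      using Min_in[OF finD neD] unfolding D_def by auto
    then show "has_induced V E Gamma1_edge \<or> has_induced V E Gamma2_edge" using lower by auto
  next
    assume "has_induced V E Gamma1_edge \<or> has_induced V E Gamma2_edge"
    then obtain W where "local_resolving_set V E W" "card W = card V - 4"
      using induced_lrs[OF sg cg] by blast
    then have "card V - 4 \<in> D" unfolding D_def by (metis (mono_tags, lifting) mem_Collect_eq)
    then show "Min D = card V - 4" using Min_le[OF finD] ge by fastforce
  qed
  show ?thesis
    unfolding dim Gamma_free_def using ge le iff4 n5 by auto
qed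

end
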